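(* Let $\Phi$ be an extremal instance and fix a resampling table $(\omega_{i,j})$. Suppose that, for some sequence of choices of false clauses, $\mathrm{PRS}(\Phi,\mathcal D)$ run on this table terminates with a certain transcript. Then, for every other sequence of choices of false clauses, $\mathrm{PRS}(\Phi,\mathcal D)$ run on the same table also terminates, and it terminates with the same transcript, after the same number of iterations.
   Context: Setting: For $i\in[n]$, $X_i$ takes values in a countable set $D_i$ equipped with a probability distribution $\mathcal D_i$; $\mathcal D=\mathcal D_1\times\cdots\times\mathcal D_n$ is the product distribution. A formula $\Phi=\phi_1\wedge\cdots\wedge\phi_m$ is a conjunction of clauses. Each clause $\phi_k$ is a Boolean function of the variables $X_i$ with $i\in\mathrm{Scp}(\phi_k)$, where $\mathrm{Scp}(\phi_k)\subseteq[n]$ is a nonempty set called the scope of $\phi_k$. The instance $\Phi$ is extremal if for all $1\le k<\ell\le m$ with $\mathrm{Scp}(\phi_k)\cap\mathrm{Scp}(\phi_\ell)\neq\emptyset$, the formula $\phi_k\vee\phi_\ell$ is true under every assignment. Algorithm $\mathrm{PRS}(\Phi,\mathcal D)$: sample $\mathbf X$ from $\mathcal D$. While $\Phi(\mathbf X)$ is false, choose any clause $\phi_k$ false under the current $\mathbf X$ and resample all $X_i$, $i\in\mathrm{Scp}(\phi_k)$, from $\mathcal D_i$. Resampling table: an array $(\omega_{i,j}: i\in[n],\ j\in\{0,1,2,\dots\})$ with each $\omega_{i,j}\in D_i$. Running PRS on the table means the following. Let $j(i,0)=0$ and $X_i^0=\omega_{i,0}$. In iteration $t$, where the scope $\mathrm{Scp}(\phi_{k_t})$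 of a clause $\phi_{k_t}$ false at time $t-1$ is resampled, set $j(i,t)=j(i,t-1)+1$ for $i\in\mathrm{Scp}(\phi_{k_t})$ and $j(i,t)=j(i,t-1)$ otherwise, and let $X_i^t=\omega_{i,j(i,t)}$. Thus only the choice of clauses remains free. The frontier at time $t$ is $F(t)=(j(1,t),\dots,j(n,t))$. Each iteration $t$ creates a resampling block $\{(i,j(i,t-1)): i\in\mathrm{Scp}(\phi_{k_t})\}$; these blocks partition $\{(i,j): j<j(i,t)\}$. The transcript at time $t$ is the frontier $F(t)$ together with this partition into resampling blocks. *)

theory Defs
  imports Main "HOL-Library.Countable_Set"
begin

(* Variables are indexed by i < n (i.e. [n] = {0..<n}); clauses by k < m.
   A clause k has scope scp k :: nat set and Boolean function phi k on
   assignments (nat => 'a).  A run of PRS on the table is determined by the list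
   ks of chosen clauses, ks ! (t-1) = k_t. *)

definition frontier :: "(nat \<Rightarrow> nat set) \<Rightarrow> nat list \<Rightarrow> nat \<Rightarrow> nat" where
  "frontier scp ks i = length (filter (\<lambda>k. i \<in> scp k) ks)"

definition cur_state :: "(nat \<Rightarrow> nat \<Rightarrow> 'a) \<Rightarrow> (nat \<Rightarrow> nat set) \<Rightarrow> nat list \<Rightarrow> nat \<Rightarrow> 'a" where
  "cur_state omega scp ks = (\<lambda>i. omega i (frontier scp ks i))"

definition formula_holds :: "nat \<Rightarrow> (nat \<Rightarrow> (nat \<Rightarrow> 'a) \<Rightarrow> bool) \<Rightarrow> (nat \<Rightarrow> 'a) \<Rightarrow> bool" where
  "formula_holds m phi x \<longleftrightarrow> (\<forall>k<m. phi k x)"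

definition valid_choices :: "nat \<Rightarrow> (nat \<Rightarrow> (nat \<Rightarrow> 'a) \<Rightarrow> bool) \<Rightarrow> (nat \<Rightarrow> nat set)
    \<Rightarrow> (nat \<Rightarrow> nat \<Rightarrow> 'a) \<Rightarrow> nat list \<Rightarrow> bool" where
  "valid_choices m phi scp omega ks \<longleftrightarrow>
     (\<forall>t < length ks. ks ! t < m \<and> \<not> phi (ks ! t) (cur_state omega scp (take t ks)))"

definition terminated_run :: "nat \<Rightarrow> (nat \<Rightarrow> (nat \<Rightarrow> 'a) \<Rightarrow> bool) \<Rightarrow> (nat \<Rightarrow> nat set)
    \<Rightarrow> (nat \<Rightarrow> nat \<Rightarrow> 'a) \<Rightarrow> nat list \<Rightarrow> bool" where
  "terminated_run m phi scp omega ks \<longleftrightarrow>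
     valid_choices m phi scp omega ks \<and> formula_holds m phi (cur_state omega scp ks)"

definition res_blocks :: "(nat \<Rightarrow> nat set) \<Rightarrow> nat list \<Rightarrow> (nat \<times> nat) set set" where
  "res_blocks scp ks =
     {{(i, frontier scp (take t ks) i) | i. i \<in> scp (ks ! t)} | t. t < length ks}"

definition transcript :: "(nat \<Rightarrow> nat set) \<Rightarrow> nat list \<Rightarrow> (nat \<Rightarrow> nat) \<times> (nat \<times> nat) set set" where
  "transcript scp ks = (frontier scp ks, res_blocks scp ks)"

definition extremal :: "nat \<Rightarrow> (nat \<Rightarrow> 'a set) \<Rightarrow> nat \<Rightarrow> (nat \<Rightarrow> (nat \<Rightarrow> 'a) \<Rightarrow> bool)
    \<Rightarrow> (nat \<Rightarrow> nat set) \<Rightarrow> bool" where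
  "extremal n D m phi scp \<longleftrightarrow>
     (\<forall>k l. k < l \<and> l < m \<and> scp k \<inter> scp l \<noteq> {} \<longrightarrow>
        (\<forall>x. (\<forall>i<n. x i \<in> D i) \<longrightarrow> phi k x \<or> phi l x))"

end

theory Submission
  imports Defs
begin

lemma frontier_append: "frontier scp (xs @ ys) i = frontier scp xs i + frontier scp ys i"
  by (simp add: frontier_def)

lemma frontier_app_fun: "frontier scp (xs @ ys) = (\<lambda>i. frontier scp xs i + frontier scp ys i)"
  by (simp add: fun_eq_iff frontier_def)

lemma valid_snoc:
  "valid_choices m phi scp omega (xs @ [k]) \<longleftrightarrow>
    valid_choices m phi scp omega xs \<and> k < m \<and> \<not> phi k (cur_state omega scp xs)"
  unfolding valid_choices_def
  by (auto simp: nth_append less_Suc_eq)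

lemma valid_prefix:
  "valid_choices m phi scp omega (xs @ ys) \<Longrightarrow> valid_choices m phi scp omega xs"
proof (induction ys rule: rev_induct)
  case Nil then show ?case by simp
next
  case (snoc y ys) then show ?case using valid_snoc[of m phi scp omega "xs@ys" y] by simp
qed

lemma valid_cong:
  assumes "frontier scp xs = frontier scp xs'" "valid_choices m phi scp omega xs'"
  shows "valid_choices m phi scp omega (xs @ ys) \<Longrightarrow> valid_choices m phi scp omega (xs' @ ys)
     \<and> frontier scp (xs @ ys) = frontier scp (xs' @ ys)"
proof (induction ys rule: rev_induct)
  case Nil then show ?case using assms by simp
next
  case (snoc y ys)
  have v: "valid_choices m phi scp omega (xs @ ys)" "y < m" "\<not> phi y (cur_state omega scp (xs@ys))"
    using snoc.prems valid_snoc[of m phi scp omega "xs@ys" y] by auto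
  then have IH: "valid_choices m phi scp omega (xs' @ ys)" "frontier scp (xs @ ys) = frontier scp (xs' @ ys)"
    using snoc.IH by auto
  have "cur_state omega scp (xs@ys) = cur_state omega scp (xs'@ys)"
    unfolding cur_state_def using IH(2) by simp
  then show ?case using v IH valid_snoc[of m phi scp omega "xs'@ys" y]
    by (metis append_assoc assms(1) frontier_app_fun)
qed

lemma res_blocks_image:
  "res_blocks scp ks = (\<lambda>t. {(i, frontier scp (take t ks) i) | i. i \<in> scp (ks ! t)}) ` {..<length ks}"
  unfolding res_blocks_def by auto

lemma res_blocks_snoc:
  "res_blocks scp (xs @ [k]) = insert {(i, frontier scp xs i) | i. i \<in> scp k} (res_blocks scp xs)"
proof -
  define f where "f = (\<lambda>t. {(i, frontier scp (take t (xs@[k])) i) | i. i \<in> scp ((xs@[k]) ! t)})"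
  have 1: "res_blocks scp (xs @ [k]) = f ` {..<Suc (length xs)}"
    unfolding f_def by (subst res_blocks_image) simp
  have 2: "{..<Suc (length xs)} = insert (length xs) {..<length xs}" by auto
  have 3: "f ` {..<length xs}
     = (\<lambda>t. {(i, frontier scp (take t xs) i) | i. i \<in> scp (xs ! t)}) ` {..<length xs}"
    unfolding f_def by (rule image_cong) (auto simp: nth_append)
  have 4: "f (length xs) = {(i, frontier scp xs i) | i. i \<in> scp k}" unfolding f_def by simp
  show ?thesis unfolding 1 2 image_insert 3 4 res_blocks_image[of scp xs] ..
qed


lemma res_blocks_cong:
  assumes "frontier scp xs = frontier scp xs'" "res_blocks scp xs = res_blocks scp xs'"
  shows "res_blocks scp (xs @ ys) = res_blocks scp (xs' @ ys) \<and> frontier scp (xs @ ys) = frontier scp (xs' @ ys)"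
proof (induction ys rule: rev_induct)
  case Nil then show ?case using assms by simp
next
  case (snoc y ys)
  then show ?case using res_blocks_snoc[of scp "xs@ys" y] res_blocks_snoc[of scp "xs'@ys" y]
    by (metis append_assoc assms(1) frontier_app_fun)
qed

lemma terminated_exists:
  "\<forall>xs. valid_choices m phi scp omega xs \<and> (\<forall>e. valid_choices m phi scp omega (xs @ e) \<longrightarrow> length e \<le> B)
     \<longrightarrow> (\<exists>t. terminated_run m phi scp omega (xs @ t))"
proof (induction B)
  case 0
  show ?case
  proof (intro allI impI)
    fix xs assume a: "valid_choices m phi scp omega xs \<and> (\<forall>e. valid_choices m phi scp omega (xs @ e) \<longrightarrow> length e \<le> 0)"
    have "formula_holds m phi (cur_state omega scp xs)"
    proof (rule ccontr)
      assume "\<not> formula_holds m phi (cur_state omega scp xs)"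
      then obtain k where "k < m" "\<not> phi k (cur_state omega scp xs)" unfolding formula_holds_def by auto
      then have "valid_choices m phi scp omega (xs @ [k])" using a valid_snoc by blast
      then show False using a by fastforce
    qed
    then show "\<exists>t. terminated_run m phi scp omega (xs @ t)" using a unfolding terminated_run_def
      by (intro exI[of _ "[]"]) simp
  qed
next
  case (Suc B)
  show ?case
  proof (intro allI impI)
    fix xs assume a: "valid_choices m phi scp omega xs \<and> (\<forall>e. valid_choices m phi scp omega (xs @ e) \<longrightarrow> length e \<le> Suc B)"
    show "\<exists>t. terminated_run m phi scp omega (xs @ t)"
    proof (cases "formula_holds m phi (cur_state omega scp xs)")
      case True
      then show ?thesis using a unfolding terminated_run_def by (intro exI[of _ "[]"]) simp
    next
      case False
      then obtain k where "k < m" "\<not> phi k (cur_state omega scp xs)" unfolding formula_holds_def by auto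
      then have v: "valid_choices m phi scp omega (xs @ [k])" using a valid_snoc by blast
      have "\<forall>e. valid_choices m phi scp omega ((xs @ [k]) @ e) \<longrightarrow> length e \<le> B"
      proof (intro allI impI)
        fix e assume "valid_choices m phi scp omega ((xs @ [k]) @ e)"
        then have "length (k # e) \<le> Suc B" using a by (metis append_Cons append_assoc self_append_conv2)
        then show "length e \<le> B" by simp
      qed
      then obtain t where "terminated_run m phi scp omega ((xs @ [k]) @ t)" using Suc.IH v by blast
      then show ?thesis by (intro exI[of _ "k # t"]) simp
    qed
  qed
qed


lemma cur_state_cong: "frontier scp a = frontier scp b \<Longrightarrow> cur_state omega scp a = cur_state omega scp b"
  unfolding cur_state_def by simp

context
  fixes n m :: nat and D :: "nat \<Rightarrow> 'a set" and scp :: "nat \<Rightarrow> nat set"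
    and phi :: "nat \<Rightarrow> (nat \<Rightarrow> 'a) \<Rightarrow> bool" and omega :: "nat \<Rightarrow> nat \<Rightarrow> 'a"
  assumes scope: "\<And>k. k < m \<Longrightarrow> scp k \<noteq> {} \<and> scp k \<subseteq> {..<n}"
    and local_dep: "\<And>k x y. k < m \<Longrightarrow> (\<forall>i\<in>scp k. x i = y i) \<Longrightarrow> phi k x = phi k y"
    and table: "\<And>i j. i < n \<Longrightarrow> omega i j \<in> D i"
    and ext: "extremal n D m phi scp"
begin

lemma disj:
  assumes "k < m" "l < m" "k \<noteq> l" "\<not> phi k (cur_state omega scp xs)" "\<not> phi l (cur_state omega scp xs)"
  shows "scp k \<inter> scp l = {}"
proof (rule ccontr)
  assume ne: "scp k \<inter> scp l \<noteq> {}"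
  have D: "\<forall>i<n. cur_state omega scp xs i \<in> D i" unfolding cur_state_def using table by simp
  show False
  proof (cases "k < l")
    case True
    then show False using ext ne D assms unfolding extremal_def by blast
  next
    case False
    then have "l < k" using assms(3) by simp
    then show False using ext ne D assms unfolding extremal_def by (metis inf_commute)
  qed
qed

lemma swap:
  assumes v: "valid_choices m phi scp omega xs" and "k < m" "l < m" "k \<noteq> l"
    "\<not> phi k (cur_state omega scp xs)" "\<not> phi l (cur_state omega scp xs)"
  shows "valid_choices m phi scp omega (xs @ [k, l]) \<and> valid_choices m phi scp omega (xs @ [l, k])
     \<and> frontier scp (xs @ [k, l]) = frontier scp (xs @ [l, k])
     \<and> res_blocks scp (xs @ [k, l]) = res_blocks scp (xs @ [l, k])"
proof -
  have d: "scp k \<inter> scp l = {}" using disj assms by blast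
  have fk: "\<And>i. i \<in> scp l \<Longrightarrow> frontier scp (xs @ [k]) i = frontier scp xs i"
    using d by (auto simp: frontier_def)
  have fl: "\<And>i. i \<in> scp k \<Longrightarrow> frontier scp (xs @ [l]) i = frontier scp xs i"
    using d by (auto simp: frontier_def)
  have p1: "phi l (cur_state omega scp (xs @ [k])) = phi l (cur_state omega scp xs)"
    using local_dep[OF assms(3)] fk unfolding cur_state_def by simp
  have p2: "phi k (cur_state omega scp (xs @ [l])) = phi k (cur_state omega scp xs)"
    using local_dep[OF assms(2)] fl unfolding cur_state_def by simp
  have v1: "valid_choices m phi scp omega (xs @ [k, l])"
    using valid_snoc[of m phi scp omega "xs@[k]" l] valid_snoc[of m phi scp omega xs k] assms p1 by simp
  have v2: "valid_choices m phi scp omega (xs @ [l, k])"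
    using valid_snoc[of m phi scp omega "xs@[l]" k] valid_snoc[of m phi scp omega xs l] assms p2 by simp
  have f: "frontier scp (xs @ [k, l]) = frontier scp (xs @ [l, k])"
    by (simp add: fun_eq_iff frontier_def)
  have "res_blocks scp ((xs @ [k]) @ [l]) = res_blocks scp ((xs @ [l]) @ [k])"
    unfolding res_blocks_snoc using fk fl by (auto simp: insert_commute)
  then show ?thesis using v1 v2 f by simp
qed


lemma main:
  "\<forall>p ks0. length ks0 = N \<longrightarrow> terminated_run m phi scp omega (p @ ks0) \<longrightarrow>
     (\<forall>ks. valid_choices m phi scp omega (p @ ks) \<longrightarrow> length ks \<le> N \<and>
        (terminated_run m phi scp omega (p @ ks) \<longrightarrow>
           frontier scp (p @ ks) = frontier scp (p @ ks0) \<and> res_blocks scp (p @ ks) = res_blocks scp (p @ ks0)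
           \<and> length ks = N))"
proof (induction N rule: less_induct)
  case (less N)
  show ?case
  proof (intro allI impI)
    fix p ks0 ks
    assume len: "length ks0 = N" and term0: "terminated_run m phi scp omega (p @ ks0)"
      and vks: "valid_choices m phi scp omega (p @ ks)"
    have vp: "valid_choices m phi scp omega p" using vks valid_prefix by blast
    show "length ks \<le> N \<and>
        (terminated_run m phi scp omega (p @ ks) \<longrightarrow>
           frontier scp (p @ ks) = frontier scp (p @ ks0) \<and> res_blocks scp (p @ ks) = res_blocks scp (p @ ks0)
           \<and> length ks = N)"
    proof (cases ks0)
      case Nil
      have hold: "formula_holds m phi (cur_state omega scp p)" using term0 Nil unfolding terminated_run_def by simp
      have "ks = []"
      proof (rule ccontr)
        assume "ks \<noteq> []"
        then obtain l ks' where "ks = l # ks'" by (cases ks) auto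
        then have "valid_choices m phi scp omega (p @ [l])" using vks valid_prefix[of m phi scp omega "p@[l]" ks'] by simp
        then show False using hold valid_snoc unfolding formula_holds_def by blast
      qed
      then show ?thesis using Nil len by simp
    next
      case (Cons k ks0')
      note C0 = Cons
      have vk: "valid_choices m phi scp omega (p @ [k])" using term0 Cons valid_prefix[of m phi scp omega "p@[k]" ks0']
        unfolding terminated_run_def by simp
      then have k: "k < m" "\<not> phi k (cur_state omega scp p)" using valid_snoc by blast+
      have term0': "terminated_run m phi scp omega ((p @ [k]) @ ks0')" using term0 Cons by simp
      have IHk: "\<forall>ks. valid_choices m phi scp omega ((p @ [k]) @ ks) \<longrightarrow> length ks \<le> N - 1 \<and>
        (terminated_run m phi scp omega ((p @ [k]) @ ks) \<longrightarrow>
           frontier scp ((p @ [k]) @ ks) = frontier scp ((p @ [k]) @ ks0') \<and> res_blocks scp ((p @ [k]) @ ks) = res_blocks scp ((p @ [k]) @ ks0')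
           \<and> length ks = N - 1)"
      proof -
        have lt: "N - 1 < N" using len Cons by simp
        have "length ks0' = N - 1" using len Cons by simp
        from less.IH[OF lt, rule_format, OF this term0'] show ?thesis by blast
      qed
      show ?thesis
      proof (cases ks)
        case Nil
        have "\<not> terminated_run m phi scp omega p"
          using k unfolding terminated_run_def formula_holds_def by blast
        then show ?thesis using Nil by simp
      next
        case (Cons l ks')
        have vl: "valid_choices m phi scp omega (p @ [l])" using vks Cons valid_prefix[of m phi scp omega "p@[l]" ks'] by simp
        then have l: "l < m" "\<not> phi l (cur_state omega scp p)" using valid_snoc by blast+
        show ?thesis
        proof (cases "k = l")
          case True
          have v': "valid_choices m phi scp omega ((p @ [k]) @ ks')" using vks Cons True by simp
          have h: "length ks' \<le> N - 1 \<and>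
            (terminated_run m phi scp omega ((p @ [k]) @ ks') \<longrightarrow>
           frontier scp ((p @ [k]) @ ks') = frontier scp ((p @ [k]) @ ks0') \<and> res_blocks scp ((p @ [k]) @ ks') = res_blocks scp ((p @ [k]) @ ks0')
           \<and> length ks' = N - 1)" using IHk v' by blast
          have e1: "p @ ks = (p @ [k]) @ ks'" using Cons True by simp
          have e2: "p @ ks0 = (p @ [k]) @ ks0'" using C0 by simp
          have N1: "N \<ge> 1" using len C0 by simp
          have A: "length ks \<le> N"
          proof -
            have "length ks' \<le> N - 1" using h by blast
            then show ?thesis using Cons N1 by simp
          qed
          have B: "terminated_run m phi scp omega (p @ ks) \<longrightarrow>
           frontier scp (p @ ks) = frontier scp (p @ ks0) \<and> res_blocks scp (p @ ks) = res_blocks scp (p @ ks0)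
           \<and> length ks = N"
            unfolding e1 e2 using h N1 Cons by simp
          show ?thesis using A B by blast
        next
          case False
          from swap[OF vp k(1) l(1) False k(2) l(2)] have
            sw: "valid_choices m phi scp omega (p @ [k, l])" "valid_choices m phi scp omega (p @ [l, k])"
              "frontier scp (p @ [k, l]) = frontier scp (p @ [l, k])"
              "res_blocks scp (p @ [k, l]) = res_blocks scp (p @ [l, k])" by auto
          have bnd: "\<forall>e. valid_choices m phi scp omega ((p @ [k, l]) @ e) \<longrightarrow> length e \<le> N"
          proof (intro allI impI)
            fix e assume "valid_choices m phi scp omega ((p @ [k, l]) @ e)"
            then have "valid_choices m phi scp omega ((p @ [k]) @ (l # e))" by simp
            then have "length (l # e) \<le> N - 1" using IHk by blast
            then show "length e \<le> N" by simp
          qed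
          obtain t where tt: "terminated_run m phi scp omega ((p @ [k, l]) @ t)"
            using terminated_exists[of m phi scp omega N] sw(1) bnd by blast
          have IHk_t: "length (l # t) = N - 1"
            "frontier scp ((p @ [k]) @ l # t) = frontier scp ((p @ [k]) @ ks0')"
            "res_blocks scp ((p @ [k]) @ l # t) = res_blocks scp ((p @ [k]) @ ks0')"
          proof -
            have t': "terminated_run m phi scp omega ((p @ [k]) @ l # t)" using tt by simp
            then have "valid_choices m phi scp omega ((p @ [k]) @ l # t)" unfolding terminated_run_def by blast
            then have "length (l # t) \<le> N - 1 \<and>
            (terminated_run m phi scp omega ((p @ [k]) @ l # t) \<longrightarrow>
           frontier scp ((p @ [k]) @ l # t) = frontier scp ((p @ [k]) @ ks0') \<and> res_blocks scp ((p @ [k]) @ l # t) = res_blocks scp ((p @ [k]) @ ks0')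
           \<and> length (l # t) = N - 1)" using IHk by blast
            then show "length (l # t) = N - 1"
            "frontier scp ((p @ [k]) @ l # t) = frontier scp ((p @ [k]) @ ks0')"
            "res_blocks scp ((p @ [k]) @ l # t) = res_blocks scp ((p @ [k]) @ ks0')" using t' by blast+
          qed
          have N1: "N \<ge> 1" using len C0 by simp
          have vlk: "valid_choices m phi scp omega ((p @ [l, k]) @ t)"
            and flk: "frontier scp ((p @ [k, l]) @ t) = frontier scp ((p @ [l, k]) @ t)"
            using valid_cong[OF sw(3) sw(2), of t] tt unfolding terminated_run_def by auto
          have rlk: "res_blocks scp ((p @ [k, l]) @ t) = res_blocks scp ((p @ [l, k]) @ t)"
            using res_blocks_cong[OF sw(3) sw(4)] by blast
          have tlk: "terminated_run m phi scp omega ((p @ [l]) @ (k # t))"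
          proof -
            have c: "cur_state omega scp ((p @ [k, l]) @ t) = cur_state omega scp ((p @ [l, k]) @ t)"
              by (rule cur_state_cong[OF flk])
            have e: "(p @ [l]) @ (k # t) = (p @ [l, k]) @ t" by simp
            show ?thesis unfolding e terminated_run_def using vlk tt c unfolding terminated_run_def by simp
          qed
          have IHl: "\<forall>ks. valid_choices m phi scp omega ((p @ [l]) @ ks) \<longrightarrow> length ks \<le> length (k # t) \<and>
            (terminated_run m phi scp omega ((p @ [l]) @ ks) \<longrightarrow>
             frontier scp ((p @ [l]) @ ks) = frontier scp ((p @ [l]) @ (k # t)) \<and>
             res_blocks scp ((p @ [l]) @ ks) = res_blocks scp ((p @ [l]) @ (k # t))
             \<and> length ks = length (k # t))"
          proof -
            have lt: "length (k # t) < N" using IHk_t(1) N1 by simp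
            from less.IH[OF lt, rule_format, OF refl tlk] show ?thesis by blast
          qed
          have vks': "valid_choices m phi scp omega ((p @ [l]) @ ks')" using vks Cons by simp
          have A: "length ks \<le> N" using IHl[rule_format, OF vks'] Cons IHk_t(1) N1 by auto
          have B: "frontier scp (p @ ks) = frontier scp (p @ ks0) \<and> res_blocks scp (p @ ks) = res_blocks scp (p @ ks0)
                 \<and> length ks = N" if tr: "terminated_run m phi scp omega (p @ ks)"
          proof -
            have "terminated_run m phi scp omega ((p @ [l]) @ ks')" using tr Cons by simp
            then have "frontier scp ((p @ [l]) @ ks') = frontier scp ((p @ [l]) @ (k # t)) \<and>
             res_blocks scp ((p @ [l]) @ ks') = res_blocks scp ((p @ [l]) @ (k # t))
             \<and> length ks' = length (k # t)" using IHl vks' by blast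
            then show ?thesis using flk rlk IHk_t Cons C0 N1 by simp
          qed
          show ?thesis using A B by blast
        qed
      qed
    qed
  qed
qed

end

theorem lemma2:
  fixes n m :: nat
    and D :: "nat \<Rightarrow> 'a set"
    and scp :: "nat \<Rightarrow> nat set"
    and phi :: "nat \<Rightarrow> (nat \<Rightarrow> 'a) \<Rightarrow> bool"
    and omega :: "nat \<Rightarrow> nat \<Rightarrow> 'a"
    and ks0 :: "nat list"
  assumes countable: "\<And>i. i < n \<Longrightarrow> countable (D i)"
    and scope: "\<And>k. k < m \<Longrightarrow> scp k \<noteq> {} \<and> scp k \<subseteq> {..<n}"
    and local_dep: "\<And>k x y. k < m \<Longrightarrow> (\<forall>i\<in>scp k. x i = y i) \<Longrightarrow> phi k x = phi k y"
    and table: "\<And>i j. i < n \<Longrightarrow> omega i j \<in> D i"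
    and ext: "extremal n D m phi scp"
    and run0: "terminated_run m phi scp omega ks0"
  shows "(\<forall>ks. valid_choices m phi scp omega ks \<longrightarrow> length ks \<le> length ks0)
       \<and> (\<forall>ks. terminated_run m phi scp omega ks \<longrightarrow>
              transcript scp ks = transcript scp ks0 \<and> length ks = length ks0)"
proof -
  have M: "\<forall>ks. valid_choices m phi scp omega ([] @ ks) \<longrightarrow> length ks \<le> length ks0 \<and>
        (terminated_run m phi scp omega ([] @ ks) \<longrightarrow>
           frontier scp ([] @ ks) = frontier scp ([] @ ks0) \<and> res_blocks scp ([] @ ks) = res_blocks scp ([] @ ks0)
           \<and> length ks = length ks0)"
  proof -
    have M0: "\<forall>p ks0'. length ks0' = length ks0 \<longrightarrow> terminated_run m phi scp omega (p @ ks0') \<longrightarrow>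
     (\<forall>ks. valid_choices m phi scp omega (p @ ks) \<longrightarrow> length ks \<le> length ks0 \<and>
        (terminated_run m phi scp omega (p @ ks) \<longrightarrow>
           frontier scp (p @ ks) = frontier scp (p @ ks0') \<and> res_blocks scp (p @ ks) = res_blocks scp (p @ ks0')
           \<and> length ks = length ks0))"
      by (rule main[OF scope local_dep table ext])
    have r: "terminated_run m phi scp omega ([] @ ks0)" using run0 by simp
    show ?thesis using M0[rule_format, OF refl r] by blast
  qed
  show ?thesis
  proof (intro conjI allI impI)
    fix ks assume "valid_choices m phi scp omega ks"
    then show "length ks \<le> length ks0" using M by simp
  next
    fix ks assume t: "terminated_run m phi scp omega ks"
    then have "valid_choices m phi scp omega ks" unfolding terminated_run_def by simp
    then have h: "frontier scp ks = frontier scp ks0 \<and> res_blocks scp ks = res_blocks scp ks0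
           \<and> length ks = length ks0" using M t by simp
    then show "transcript scp ks = transcript scp ks0" unfolding transcript_def by simp
    show "length ks = length ks0" using h by simp
  qed
qed

end
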